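(* For all integers $m\ge 2$, $n\ge 2$, the state complexity of $L(M)^R\cap L(N)$, where $M$ ranges over complete DFAs with $m$ states and $N$ over complete DFAs with $n$ states (over a common alphabet), is exactly $2^m\cdot n-n+1$: for every such $M,N$ some DFA with at most $2^m\cdot n-n+1$ states accepts $L(M)^R\cap L(N)$, and there exist such $M,N$ for which the minimal complete DFA of $L(M)^R\cap L(N)$ has exactly $2^m\cdot n-n+1$ states.
   Context: DFAs are complete deterministic finite automata; $L(M)$ is the accepted language; $L^R=\{w^R: w\in L\}$ is the reversal of $L$. The state complexity of a regular language is the number of states of its minimal complete DFA; the state complexity of an operation is the maximum state complexity of its result over all argument DFAs of the given sizes. *)

theory Defs
  imports Main
begin

record ('s, 'a) dfa =
  states :: "'s set"
  start  :: 's
  delta  :: "'s \<Rightarrow> 'a \<Rightarrow> 's"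
  final  :: "'s set"

definition is_dfa :: "'a set \<Rightarrow> ('s, 'a) dfa \<Rightarrow> bool" where
  "is_dfa \<Sigma> M \<longleftrightarrow> finite \<Sigma> \<and> finite (states M) \<and> start M \<in> states M
     \<and> (\<forall>q\<in>states M. \<forall>a\<in>\<Sigma>. delta M q a \<in> states M) \<and> final M \<subseteq> states M"

definition delta_star :: "('s, 'a) dfa \<Rightarrow> 's \<Rightarrow> 'a list \<Rightarrow> 's" where
  "delta_star M q w = foldl (delta M) q w"

definition lang :: "'a set \<Rightarrow> ('s, 'a) dfa \<Rightarrow> 'a list set" where
  "lang \<Sigma> M = {w \<in> lists \<Sigma>. delta_star M (start M) w \<in> final M}"

definition reversal :: "'a list set \<Rightarrow> 'a list set" where
  "reversal L = rev ` L"

text \<open>State sets are taken inside nat, which is no loss of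
  generality since every finite state set can be renamed injectively into nat.\<close>

definition state_complexity :: "'a set \<Rightarrow> 'a list set \<Rightarrow> nat" where
  "state_complexity \<Sigma> L =
     (LEAST k. \<exists>D :: (nat, 'a) dfa. is_dfa \<Sigma> D \<and> card (states D) = k \<and> lang \<Sigma> D = L)"

end

theory Submission imports Defs "HOL-Library.Nat_Bijection" begin

lemma delta_star_snoc: "delta_star M q (w @ [a]) = delta M (delta_star M q w) a"
  by (simp add: delta_star_def)
lemma delta_star_Cons: "delta_star M q (a # w) = delta_star M (delta M q a) w"
  by (simp add: delta_star_def)
lemma delta_star_Nil[simp]: "delta_star M q [] = q"
  by (simp add: delta_star_def)
lemma delta_star_append: "delta_star M q (u @ v) = delta_star M (delta_star M q u) v"
  by (simp add: delta_star_def)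

lemma delta_star_in:
  assumes "is_dfa \<Sigma> M" "q \<in> states M" "w \<in> lists \<Sigma>"
  shows "delta_star M q w \<in> states M"
  using assms(2,3)
proof (induction w arbitrary: q)
  case Nil then show ?case by simp
next
  case (Cons a w)
  then show ?case using assms(1) by (simp add: delta_star_Cons is_dfa_def)
qed

definition ren :: "('s \<Rightarrow> nat) \<Rightarrow> ('s,'a) dfa \<Rightarrow> (nat,'a) dfa" where
  "ren h A = \<lparr>states = h ` states A, start = h (start A),
     delta = (\<lambda>x a. h (delta A (inv_into (states A) h x) a)), final = h ` final A\<rparr>"

lemma ren_star:
  assumes "is_dfa \<Sigma> A" "inj_on h (states A)" "q \<in> states A" "w \<in> lists \<Sigma>"
  shows "delta_star (ren h A) (h q) w = h (delta_star A q w)"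
  using assms(3,4)
proof (induction w arbitrary: q)
  case Nil then show ?case by simp
next
  case (Cons a w)
  have "delta A q a \<in> states A" using Cons.prems assms(1) by (auto simp: is_dfa_def)
  moreover have "delta (ren h A) (h q) a = h (delta A q a)"
    using Cons.prems assms(2) by (simp add: ren_def)
  ultimately show ?case using Cons by (simp add: delta_star_Cons)
qed

lemma ren_ok:
  assumes "is_dfa \<Sigma> A" "inj_on h (states A)"
  shows "is_dfa \<Sigma> (ren h A) \<and> card (states (ren h A)) = card (states A) \<and> lang \<Sigma> (ren h A) = lang \<Sigma> A"
proof (intro conjI)
  show "is_dfa \<Sigma> (ren h A)" using assms unfolding is_dfa_def ren_def by auto
  show "card (states (ren h A)) = card (states A)" using assms(2) by (simp add: ren_def card_image)
  show "lang \<Sigma> (ren h A) = lang \<Sigma> A"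
  proof (rule set_eqI)
    fix w
    show "w \<in> lang \<Sigma> (ren h A) \<longleftrightarrow> w \<in> lang \<Sigma> A"
    proof (cases "w \<in> lists \<Sigma>")
      case True
      have s: "start A \<in> states A" using assms(1) by (simp add: is_dfa_def)
      have e: "delta_star (ren h A) (start (ren h A)) w = h (delta_star A (start A) w)"
        using ren_star[OF assms s True] by (simp add: ren_def)
      have i: "delta_star A (start A) w \<in> states A" using delta_star_in[OF assms(1) s True] .
      have f: "final A \<subseteq> states A" using assms(1) by (simp add: is_dfa_def)
      have "h (delta_star A (start A) w) \<in> h ` final A \<longleftrightarrow> delta_star A (start A) w \<in> final A"
        using inj_on_image_mem_iff[OF assms(2) i f] .
      then show ?thesis using True e by (simp add: lang_def ren_def)
    qed (simp add: lang_def)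
  qed
qed

lemma to_nat_dfa:
  assumes "is_dfa \<Sigma> (A :: ('s,'a) dfa)"
  shows "\<exists>D :: (nat,'a) dfa. is_dfa \<Sigma> D \<and> card (states D) = card (states A) \<and> lang \<Sigma> D = lang \<Sigma> A"
proof -
  have "finite (states A)" using assms by (simp add: is_dfa_def)
  then obtain h where "bij_betw h (states A) {0..<card (states A)}" using ex_bij_betw_finite_nat by blast
  then have "inj_on h (states A)" by (simp add: bij_betw_def)
  then show ?thesis using ren_ok[OF assms] by blast
qed

definition prodD :: "('s,'a) dfa \<Rightarrow> ('t,'a) dfa \<Rightarrow> (('s set \<times> 't) option, 'a) dfa" where
  "prodD M N = \<lparr>states = insert None (Some ` ((Pow (states M) - {{}}) \<times> states N)),
     start = (if final M = {} then None else Some (final M, start N)),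
     delta = (\<lambda>x a. case x of None \<Rightarrow> None | Some (S,q) \<Rightarrow>
        (let S' = {p \<in> states M. delta M p a \<in> S} in if S' = {} then None else Some (S', delta N q a))),
     final = {x. \<exists>S q. x = Some (S,q) \<and> start M \<in> S \<and> q \<in> final N \<and> S \<subseteq> states M \<and> q \<in> states N}\<rparr>"

definition SW :: "('s,'a) dfa \<Rightarrow> 'a list \<Rightarrow> 's set" where
  "SW M w = {p \<in> states M. delta_star M p (rev w) \<in> final M}"

lemma prod_star:
  assumes "is_dfa \<Sigma> M" "is_dfa \<Sigma> N" "w \<in> lists \<Sigma>"
  shows "delta_star (prodD M N) (start (prodD M N)) w =
     (if SW M w = {} then None else Some (SW M w, delta_star N (start N) w))"
  using assms(3)
proof (induction w rule: rev_induct)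
  case Nil
  have "final M \<subseteq> states M" using assms(1) by (simp add: is_dfa_def)
  then have "SW M [] = final M" by (auto simp: SW_def)
  then show ?case by (simp add: prodD_def)
next
  case (snoc a w)
  have a: "a \<in> \<Sigma>" and w: "w \<in> lists \<Sigma>" using snoc.prems by auto
  have e: "SW M (w @ [a]) = {p \<in> states M. delta M p a \<in> SW M w}"
    using assms(1) a by (auto simp: SW_def delta_star_Cons is_dfa_def)
  show ?case
  proof (cases "SW M w = {}")
    case True
    then show ?thesis using snoc.IH[OF w] e by (simp add: delta_star_snoc prodD_def)
  next
    case False
    then show ?thesis using snoc.IH[OF w] e by (simp add: delta_star_snoc prodD_def Let_def)
  qed
qed

lemma prod_ok:
  assumes "is_dfa \<Sigma> M" "is_dfa \<Sigma> N"
  shows "is_dfa \<Sigma> (prodD M N) \<and> card (states (prodD M N)) = (2 ^ card (states M) - 1) * card (states N) + 1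
     \<and> lang \<Sigma> (prodD M N) = reversal (lang \<Sigma> M) \<inter> lang \<Sigma> N"
proof (intro conjI)
  have fM: "finite (states M)" and fN: "finite (states N)" using assms by (auto simp: is_dfa_def)
  show "is_dfa \<Sigma> (prodD M N)"
    using assms unfolding is_dfa_def prodD_def
    by (auto simp: Let_def split: option.splits)
  have "card (states (prodD M N)) = Suc (card ((Pow (states M) - {{}}) \<times> states N))"
    unfolding prodD_def using fM fN by (simp add: card_image)
  also have "\<dots> = (2 ^ card (states M) - 1) * card (states N) + 1"
    using fM fN by (simp add: card_cartesian_product card_Pow)
  finally show "card (states (prodD M N)) = (2 ^ card (states M) - 1) * card (states N) + 1" .
  show "lang \<Sigma> (prodD M N) = reversal (lang \<Sigma> M) \<inter> lang \<Sigma> N"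
  proof (rule set_eqI)
    fix w
    show "w \<in> lang \<Sigma> (prodD M N) \<longleftrightarrow> w \<in> reversal (lang \<Sigma> M) \<inter> lang \<Sigma> N"
    proof (cases "w \<in> lists \<Sigma>")
      case True
      have sM: "start M \<in> states M" and sN: "start N \<in> states N" using assms by (auto simp: is_dfa_def)
      have qN: "delta_star N (start N) w \<in> states N" using delta_star_in[OF assms(2) sN True] .
      have r: "w \<in> reversal L \<longleftrightarrow> rev w \<in> L" for L
        unfolding reversal_def by (metis image_iff rev_rev_ident)
      have "rev w \<in> lists \<Sigma>" using True by (simp add: in_lists_conv_set)
      then show ?thesis using True prod_star[OF assms True] sM qN
        by (auto simp: lang_def r prodD_def SW_def)
    next
      case False
      have r: "w \<in> reversal L \<Longrightarrow> rev w \<in> L" for L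
        unfolding reversal_def by (metis image_iff rev_rev_ident)
      show ?thesis using False r[of "lang \<Sigma> M"] by (auto simp: lang_def)
    qed
  qed
qed

lemma part1:
  assumes "is_dfa \<Sigma> (M :: ('s,'a) dfa)" "is_dfa \<Sigma> (N :: ('t,'a) dfa)"
  shows "\<exists>D :: (nat,'a) dfa. is_dfa \<Sigma> D \<and> card (states D) = 2 ^ card (states M) * card (states N) - card (states N) + 1 \<and>
               lang \<Sigma> D = reversal (lang \<Sigma> M) \<inter> lang \<Sigma> N"
proof -
  have e: "(2 ^ card (states M) - 1) * card (states N) = 2 ^ card (states M) * card (states N) - card (states N)"
    by (simp add: diff_mult_distrib)
  show ?thesis using prod_ok[OF assms] to_nat_dfa[of \<Sigma> "prodD M N"] by (metis e)
qed


definition bL :: "nat set \<Rightarrow> nat" where "bL T = 3 * set_encode T"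
definition cL :: "nat \<Rightarrow> nat" where "cL j = 3 * j + 1"
definition hL :: "nat \<Rightarrow> nat \<Rightarrow> nat \<Rightarrow> nat" where "hL m p j = 3 * (p + m * j) + 2"

definition WM :: "nat \<Rightarrow> (nat,nat) dfa" where
  "WM m = \<lparr>states = {..<m}, start = 0,
     delta = (\<lambda>p x. if x mod 3 = 0 then (if p \<in> set_decode (x div 3) then 0 else 1)
                    else if x mod 3 = 1 then p else (x div 3) mod m),
     final = {0}\<rparr>"

definition WN :: "nat \<Rightarrow> nat \<Rightarrow> (nat,nat) dfa" where
  "WN m n = \<lparr>states = {..<n}, start = 0,
     delta = (\<lambda>q x. if x mod 3 = 0 then q else if x mod 3 = 1 then (x div 3) mod n
                    else if q = ((x div 3) div m) mod n then 0 else 1),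
     final = {0}\<rparr>"

definition WS :: "nat \<Rightarrow> nat \<Rightarrow> nat set" where
  "WS m n = bL ` Pow {..<m} \<union> cL ` {..<n} \<union> (\<lambda>(p,j). hL m p j) ` ({..<m} \<times> {..<n})"

lemma WS_fin: "finite (WS m n)" by (simp add: WS_def)

lemma WM_ok: "m \<ge> 2 \<Longrightarrow> is_dfa (WS m n) (WM m) \<and> card (states (WM m)) = m"
  by (auto simp: is_dfa_def WM_def WS_fin)

lemma WN_ok: "n \<ge> 2 \<Longrightarrow> is_dfa (WS m n) (WN m n) \<and> card (states (WN m n)) = n"
  by (auto simp: is_dfa_def WN_def WS_fin)

lemma key:
  assumes m: "m \<ge> 2" and n: "n \<ge> 2" and T: "T \<subseteq> {..<m}" and j: "j < n" and p: "p < m" and j0: "j0 < n"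
  shows "[cL j, bL T, hL m p j0] \<in> reversal (lang (WS m n) (WM m)) \<inter> lang (WS m n) (WN m n)
     \<longleftrightarrow> p \<in> T \<and> j = j0"
proof -
  have fT: "finite T" using T finite_subset by blast
  have inS: "cL j \<in> WS m n" "bL T \<in> WS m n" "hL m p j0 \<in> WS m n"
    using T j p j0 unfolding WS_def by auto
  have r: "w \<in> reversal L \<longleftrightarrow> rev w \<in> L" for w L
    unfolding reversal_def by (metis image_iff rev_rev_ident)
  have d1: "(p + m * j0) mod m = p" "(p + m * j0) div m = j0" using p by auto
  have g: "(3*k+2) mod 3 = (2::nat) \<and> (3*k+2) div 3 = k" for k :: nat by presburger
  have hm: "hL m p j0 mod 3 = 2" "hL m p j0 div 3 = p + m * j0" unfolding hL_def using g by blast+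
  have bm: "bL T mod 3 = 0" "bL T div 3 = set_encode T" by (simp_all add: bL_def)
  have cm: "cL j mod 3 = 1" "cL j div 3 = j" by (simp_all add: cL_def)
  have M: "delta_star (WM m) 0 [hL m p j0, bL T, cL j] = (if p \<in> T then 0 else 1)"
    using hm bm cm d1 fT p by (simp add: delta_star_def WM_def)
  have N: "delta_star (WN m n) 0 [cL j, bL T, hL m p j0] = (if j = j0 then 0 else 1)"
    using hm bm cm d1 j j0 by (simp add: delta_star_def WN_def)
  have l: "[cL j, bL T, hL m p j0] \<in> lists (WS m n)" "[hL m p j0, bL T, cL j] \<in> lists (WS m n)"
    using inS by auto
  show ?thesis using M N l
    by (simp add: r lang_def WM_def WN_def)
qed

definition wd :: "nat set \<times> nat \<Rightarrow> nat list" where "wd x = [cL (snd x), bL (fst x)]"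

definition II :: "nat \<Rightarrow> nat \<Rightarrow> (nat set \<times> nat) set" where
  "II m n = insert ({},0) ((Pow {..<m} - {{}}) \<times> {..<n})"

lemma II_card: "card (II m n) = (2 ^ m - 1) * n + 1"
proof -
  have "({},0) \<notin> (Pow {..<m} - {{}}) \<times> {..<n}" by auto
  then show ?thesis unfolding II_def by (simp add: card_cartesian_product card_Pow)
qed

lemma lower:
  assumes m: "m \<ge> 2" and n: "n \<ge> 2" and D: "is_dfa (WS m n) (D :: (nat,nat) dfa)"
    and L: "lang (WS m n) D = reversal (lang (WS m n) (WM m)) \<inter> lang (WS m n) (WN m n)"
  shows "card (states D) \<ge> (2 ^ m - 1) * n + 1"
proof -
  let ?L = "reversal (lang (WS m n) (WM m)) \<inter> lang (WS m n) (WN m n)"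
  let ?f = "\<lambda>x. delta_star D (start D) (wd x)"
  have sD: "start D \<in> states D" using D by (simp add: is_dfa_def)
  have wdl: "wd x \<in> lists (WS m n)" if "x \<in> II m n" for x
    using that n unfolding wd_def II_def WS_def by auto
  have hl: "hL m p j0 \<in> WS m n" if "p < m" "j0 < n" for p j0
    using that unfolding WS_def by auto
  have mem: "u @ z \<in> lang (WS m n) D \<longleftrightarrow> delta_star D (delta_star D (start D) u) z \<in> final D"
    if "u \<in> lists (WS m n)" "z \<in> lists (WS m n)" for u z
    using that by (simp add: lang_def delta_star_append)
  have inj: "inj_on ?f (II m n)"
  proof (rule inj_onI)
    fix x y assume x: "x \<in> II m n" and y: "y \<in> II m n" and e: "?f x = ?f y"
    obtain T j where xe: "x = (T,j)" by (cases x)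
    obtain T' j' where ye: "y = (T',j')" by (cases y)
    have T: "T \<subseteq> {..<m}" "j < n" "T = {} \<longrightarrow> j = 0" using x xe m n unfolding II_def by auto
    have T': "T' \<subseteq> {..<m}" "j' < n" "T' = {} \<longrightarrow> j' = 0" using y ye m n unfolding II_def by auto
    have eq: "p \<in> T \<and> j = j0 \<longleftrightarrow> p \<in> T' \<and> j' = j0" if "p < m" "j0 < n" for p j0
    proof -
      have "wd x @ [hL m p j0] \<in> lang (WS m n) D \<longleftrightarrow> wd y @ [hL m p j0] \<in> lang (WS m n) D"
        using mem[OF wdl[OF x], of "[hL m p j0]"] mem[OF wdl[OF y], of "[hL m p j0]"] e hl[OF that] by simp
      then show ?thesis using key[OF m n T(1) T(2) that] key[OF m n T'(1) T'(2) that] L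
        by (simp add: wd_def xe ye)
    qed
    show "x = y"
    proof (cases "T = {}")
      case True
      have "T' = {}"
      proof (rule ccontr)
        assume "T' \<noteq> {}" then obtain p where "p \<in> T'" by blast
        then show False using eq[of p j'] T' True by auto
      qed
      then show ?thesis using True T T' xe ye by simp
    next
      case False
      then obtain p where p: "p \<in> T" by blast
      have jj: "j' = j" using eq[of p j] p T by auto
      have "T = T'" using eq T T' jj by blast
      then show ?thesis using jj xe ye by simp
    qed
  qed
  have "?f ` II m n \<subseteq> states D" using delta_star_in[OF D sD] wdl by blast
  moreover have "finite (states D)" using D by (simp add: is_dfa_def)
  ultimately have "card (?f ` II m n) \<le> card (states D)" by (simp add: card_mono)
  then show ?thesis using inj II_card by (simp add: card_image)
qed

theorem theorem12:
  fixes m n :: nat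
  assumes "m \<ge> 2" and "n \<ge> 2"
  shows "(\<forall>(\<Sigma> :: 'a set) (M :: ('s, 'a) dfa) (N :: ('t, 'a) dfa).
            is_dfa \<Sigma> M \<and> card (states M) = m \<and> is_dfa \<Sigma> N \<and> card (states N) = n \<longrightarrow>
            (\<exists>D :: (nat, 'a) dfa. is_dfa \<Sigma> D \<and> card (states D) \<le> 2 ^ m * n - n + 1 \<and>
               lang \<Sigma> D = reversal (lang \<Sigma> M) \<inter> lang \<Sigma> N))
       \<and> (\<exists>(\<Sigma> :: nat set) (M :: (nat, nat) dfa) (N :: (nat, nat) dfa).
            is_dfa \<Sigma> M \<and> card (states M) = m \<and> is_dfa \<Sigma> N \<and> card (states N) = n \<and>
            state_complexity \<Sigma> (reversal (lang \<Sigma> M) \<inter> lang \<Sigma> N) = 2 ^ m * n - n + 1)"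
proof (intro conjI)
  show "\<forall>(\<Sigma> :: 'a set) (M :: ('s, 'a) dfa) (N :: ('t, 'a) dfa).
            is_dfa \<Sigma> M \<and> card (states M) = m \<and> is_dfa \<Sigma> N \<and> card (states N) = n \<longrightarrow>
            (\<exists>D :: (nat, 'a) dfa. is_dfa \<Sigma> D \<and> card (states D) \<le> 2 ^ m * n - n + 1 \<and>
               lang \<Sigma> D = reversal (lang \<Sigma> M) \<inter> lang \<Sigma> N)"
    using part1 by (metis order_refl)
  have e: "(2 ^ m - 1) * n + 1 = 2 ^ m * n - n + 1" by (simp add: diff_mult_distrib)
  let ?S = "WS m n" let ?L = "reversal (lang (WS m n) (WM m)) \<inter> lang (WS m n) (WN m n)"
  have M: "is_dfa ?S (WM m)" "card (states (WM m)) = m" using WM_ok assms by auto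
  have N: "is_dfa ?S (WN m n)" "card (states (WN m n)) = n" using WN_ok assms by auto
  obtain D :: "(nat,nat) dfa" where D: "is_dfa ?S D" "card (states D) = 2 ^ m * n - n + 1" "lang ?S D = ?L"
    using part1[OF M(1) N(1)] M(2) N(2) by auto
  have "state_complexity ?S ?L = 2 ^ m * n - n + 1"
    unfolding state_complexity_def
  proof (rule Least_equality)
    show "\<exists>D :: (nat,nat) dfa. is_dfa ?S D \<and> card (states D) = 2 ^ m * n - n + 1 \<and> lang ?S D = ?L"
      using D by blast
  next
    fix k assume "\<exists>D :: (nat,nat) dfa. is_dfa ?S D \<and> card (states D) = k \<and> lang ?S D = ?L"
    then show "2 ^ m * n - n + 1 \<le> k" using lower[OF assms] e by metis
  qed
  then show "\<exists>(\<Sigma> :: nat set) (M :: (nat, nat) dfa) (N :: (nat, nat) dfa).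
            is_dfa \<Sigma> M \<and> card (states M) = m \<and> is_dfa \<Sigma> N \<and> card (states N) = n \<and>
            state_complexity \<Sigma> (reversal (lang \<Sigma> M) \<inter> lang \<Sigma> N) = 2 ^ m * n - n + 1"
    using M N by blast
qed

end
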